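(* Let $(H,\Lambda,\lambda)$ be an integral Hopf algebra in a strict symmetric monoidal category $\mathcal{C}$, with multiplication $\mu$, comultiplication $\Delta$ and antipode $s$. Define $\beta:=\lambda\circ\mu\colon H\otimes H\to I$ and $\gamma:=(s\otimes\mathrm{id}_H)\circ\Delta\circ\Lambda\colon I\to H\otimes H$. Then $H$ is nondegenerate, i.e. both $(\mathrm{id}_H\otimes\beta)\circ(\gamma\otimes\mathrm{id}_H)=\mathrm{id}_H$ and $(\beta\otimes\mathrm{id}_H)\circ(\mathrm{id}_H\otimes\gamma)=\mathrm{id}_H$ hold, if and only if $\lambda\circ s\circ\Lambda=\mathrm{id}_I$.
   Context: $\mathcal{C}$ is a strict symmetric monoidal category with unit object $I$ and symmetry $\sigma$. A Hopf algebra $(H,\mu,\eta,\Delta,\varepsilon,s)$ in $\mathcal{C}$ consists of an object $H$, an associative unital monoid $\mu\colon H\otimes H\to H$, $\eta\colon I\to H$, a coassociative counital comonoid $\Delta\colon H\to H\otimes H$, $\varepsilon\colon H\to I$, satisfying $\Delta\circ\mu=(\mu\otimes\mu)\circ(\mathrm{id}_H\otimes\sigma_{H,H}\otimes\mathrm{id}_H)\circ(\Delta\otimes\Delta)$, $\Delta\circ\eta=\eta\otimes\eta$, $\varepsilon\circ\mu=\varepsilon\otimes\varepsilon$, $\varepsilon\circ\eta=\mathrm{id}_I$, and an antipode $s\colon H\to H$ with $\mu\circ(s\otimes\mathrm{id}_H)\circ\Delta=\eta\circ\varepsilon=\mu\circ(\mathrm{id}_H\otimes s)\circ\Delta$. A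 left cointegral is a point $\Lambda\colon I\to H$ with $\mu\circ(\Lambda\otimes\mathrm{id}_H)=\Lambda\circ\varepsilon$; a right integral is a copoint $\lambda\colon H\to I$ with $(\mathrm{id}_H\otimes\lambda)\circ\Delta=\eta\circ\lambda$. An integral Hopf algebra $(H,\Lambda,\lambda)$ is a Hopf algebra with a chosen left cointegral $\Lambda$ and right integral $\lambda$ such that $\lambda\circ\Lambda=\mathrm{id}_I$. *)

theory Defs
  imports Main
begin

text \<open>Composition sm_comp g f (= g after f)
is meaningful when the codomain of f is the domain of g.\<close>

record ('o, 'm) smc =
  sm_dom   :: "'m \<Rightarrow> 'o"
  sm_cod   :: "'m \<Rightarrow> 'o"
  sm_comp  :: "'m \<Rightarrow> 'm \<Rightarrow> 'm"
  sm_id    :: "'o \<Rightarrow> 'm"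
  sm_otens :: "'o \<Rightarrow> 'o \<Rightarrow> 'o"
  sm_tens  :: "'m \<Rightarrow> 'm \<Rightarrow> 'm"
  sm_unit  :: "'o"
  sm_sym   :: "'o \<Rightarrow> 'o \<Rightarrow> 'm"

definition strict_symmetric_monoidal_category :: "('o, 'm) smc \<Rightarrow> bool" where
  "strict_symmetric_monoidal_category C \<longleftrightarrow>
     \<comment> \<open>category axioms\<close>
     (\<forall>f g. sm_cod C f = sm_dom C g \<longrightarrow>
         sm_dom C (sm_comp C g f) = sm_dom C f \<and> sm_cod C (sm_comp C g f) = sm_cod C g) \<and>
     (\<forall>f g h. sm_cod C f = sm_dom C g \<and> sm_cod C g = sm_dom C h \<longrightarrow>
         sm_comp C h (sm_comp C g f) = sm_comp C (sm_comp C h g) f) \<and>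
     (\<forall>a. sm_dom C (sm_id C a) = a \<and> sm_cod C (sm_id C a) = a) \<and>
     (\<forall>f. sm_comp C f (sm_id C (sm_dom C f)) = f \<and> sm_comp C (sm_id C (sm_cod C f)) f = f) \<and>
     \<comment> \<open>tensor is a bifunctor\<close>
     (\<forall>f g. sm_dom C (sm_tens C f g) = sm_otens C (sm_dom C f) (sm_dom C g) \<and>
            sm_cod C (sm_tens C f g) = sm_otens C (sm_cod C f) (sm_cod C g)) \<and>
     (\<forall>a b. sm_tens C (sm_id C a) (sm_id C b) = sm_id C (sm_otens C a b)) \<and>
     (\<forall>f g f' g'. sm_cod C f = sm_dom C g \<and> sm_cod C f' = sm_dom C g' \<longrightarrow>
         sm_tens C (sm_comp C g f) (sm_comp C g' f') =
         sm_comp C (sm_tens C g g') (sm_tens C f f')) \<and>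
     \<comment> \<open>strictness\<close>
     (\<forall>a b c. sm_otens C (sm_otens C a b) c = sm_otens C a (sm_otens C b c)) \<and>
     (\<forall>a. sm_otens C (sm_unit C) a = a \<and> sm_otens C a (sm_unit C) = a) \<and>
     (\<forall>f g h. sm_tens C (sm_tens C f g) h = sm_tens C f (sm_tens C g h)) \<and>
     (\<forall>f. sm_tens C (sm_id C (sm_unit C)) f = f \<and> sm_tens C f (sm_id C (sm_unit C)) = f) \<and>
     \<comment> \<open>symmetry: natural, involutive, hexagon\<close>
     (\<forall>a b. sm_dom C (sm_sym C a b) = sm_otens C a b \<and> sm_cod C (sm_sym C a b) = sm_otens C b a) \<and>
     (\<forall>f g. sm_comp C (sm_sym C (sm_cod C f) (sm_cod C g)) (sm_tens C f g) =
            sm_comp C (sm_tens C g f) (sm_sym C (sm_dom C f) (sm_dom C g))) \<and>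
     (\<forall>a b. sm_comp C (sm_sym C b a) (sm_sym C a b) = sm_id C (sm_otens C a b)) \<and>
     (\<forall>a b c. sm_sym C a (sm_otens C b c) =
         sm_comp C (sm_tens C (sm_id C b) (sm_sym C a c)) (sm_tens C (sm_sym C a b) (sm_id C c)))"

definition hopf_algebra ::
  "('o, 'm) smc \<Rightarrow> 'o \<Rightarrow> 'm \<Rightarrow> 'm \<Rightarrow> 'm \<Rightarrow> 'm \<Rightarrow> 'm \<Rightarrow> bool" where
  "hopf_algebra C H mu eta De ep s \<longleftrightarrow>
     (let I = sm_unit C; iH = sm_id C H; cp = sm_comp C; tn = sm_tens C; HH = sm_otens C H H in
     sm_dom C mu = HH \<and> sm_cod C mu = H \<and>
     sm_dom C eta = I \<and> sm_cod C eta = H \<and>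
     sm_dom C De = H \<and> sm_cod C De = HH \<and>
     sm_dom C ep = H \<and> sm_cod C ep = I \<and>
     sm_dom C s = H \<and> sm_cod C s = H \<and>
     cp mu (tn mu iH) = cp mu (tn iH mu) \<and>
     cp mu (tn eta iH) = iH \<and> cp mu (tn iH eta) = iH \<and>
     cp (tn De iH) De = cp (tn iH De) De \<and>
     cp (tn ep iH) De = iH \<and> cp (tn iH ep) De = iH \<and>
     cp De mu = cp (tn mu mu) (cp (tn (tn iH (sm_sym C H H)) iH) (tn De De)) \<and>
     cp De eta = tn eta eta \<and>
     cp ep mu = tn ep ep \<and>
     cp ep eta = sm_id C I \<and>
     cp mu (cp (tn s iH) De) = cp eta ep \<and>
     cp mu (cp (tn iH s) De) = cp eta ep)"

definition left_cointegral ::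
  "('o, 'm) smc \<Rightarrow> 'o \<Rightarrow> 'm \<Rightarrow> 'm \<Rightarrow> 'm \<Rightarrow> bool" where
  "left_cointegral C H mu ep Lam \<longleftrightarrow>
     sm_dom C Lam = sm_unit C \<and> sm_cod C Lam = H \<and>
     sm_comp C mu (sm_tens C Lam (sm_id C H)) = sm_comp C Lam ep"

definition right_integral ::
  "('o, 'm) smc \<Rightarrow> 'o \<Rightarrow> 'm \<Rightarrow> 'm \<Rightarrow> 'm \<Rightarrow> bool" where
  "right_integral C H eta De lam \<longleftrightarrow>
     sm_dom C lam = H \<and> sm_cod C lam = sm_unit C \<and>
     sm_comp C (sm_tens C (sm_id C H) lam) De = sm_comp C eta lam"

definition integral_hopf_algebra ::
  "('o, 'm) smc \<Rightarrow> 'o \<Rightarrow> 'm \<Rightarrow> 'm \<Rightarrow> 'm \<Rightarrow> 'm \<Rightarrow> 'm \<Rightarrow> 'm \<Rightarrow> 'm \<Rightarrow> bool" where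
  "integral_hopf_algebra C H mu eta De ep s Lam lam \<longleftrightarrow>
     hopf_algebra C H mu eta De ep s \<and>
     left_cointegral C H mu ep Lam \<and> right_integral C H eta De lam \<and>
     sm_comp C lam Lam = sm_id C (sm_unit C)"

end

theory Submission
  imports Defs
begin

primrec pw :: "('o,'m) smc \<Rightarrow> 'o \<Rightarrow> nat \<Rightarrow> 'o" where
  "pw C H 0 = sm_unit C"
| "pw C H (Suc n) = sm_otens C H (pw C H n)"

definition lay :: "('o,'m) smc \<Rightarrow> 'o \<Rightarrow> nat \<Rightarrow> 'm \<Rightarrow> nat \<Rightarrow> 'm" where
  "lay C H i f j = sm_tens C (sm_id C (pw C H i)) (sm_tens C f (sm_id C (pw C H j)))"

fun wc :: "('o,'m) smc \<Rightarrow> 'm list \<Rightarrow> bool" where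
  "wc C [] = True"
| "wc C [f] = True"
| "wc C (f # g # r) = (sm_cod C g = sm_dom C f \<and> wc C (g # r))"

fun cmp :: "('o,'m) smc \<Rightarrow> 'm list \<Rightarrow> 'm" where
  "cmp C [] = sm_id C (sm_unit C)"
| "cmp C [f] = f"
| "cmp C (f # g # r) = sm_comp C f (cmp C (g # r))"

definition opc :: "('o,'m) smc \<Rightarrow> ('o,'m) smc" where
  "opc C = (| sm_dom = sm_cod C, sm_cod = sm_dom C, sm_comp = (\<lambda>g f. sm_comp C f g),
     sm_id = sm_id C, sm_otens = sm_otens C, sm_tens = sm_tens C, sm_unit = sm_unit C,
     sm_sym = (\<lambda>a b. sm_sym C b a) |)"

lemma pw_opc: "pw (opc C) H n = pw C H n"
  by (induction n) (simp_all add: opc_def pw.simps(2))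

lemma lay_opc: "lay (opc C) H = lay C H"
  unfolding lay_def pw_opc by (simp add: opc_def fun_eq_iff)

declare cmp.simps(3)[simp del] pw.simps(2)[simp del] One_nat_def[simp del]

lemma Suc0_1: "Suc 0 = 1" by simp
lemma Suc1_2: "Suc 1 = 2" by simp

lemma take1_Cons[simp]: "take 1 (x # xs) = [x]" by (simp add: One_nat_def)
lemma drop1_Cons[simp]: "drop 1 (x # xs) = xs" by (simp add: One_nat_def)

locale SMC =
  fixes C :: "('o,'m) smc"
  assumes smc: "strict_symmetric_monoidal_category C"
begin

abbreviation dm where "dm \<equiv> sm_dom C"
abbreviation cd where "cd \<equiv> sm_cod C"
abbreviation cp where "cp \<equiv> sm_comp C"
abbreviation tn where "tn \<equiv> sm_tens C"
abbreviation idm where "idm \<equiv> sm_id C"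
abbreviation ot where "ot \<equiv> sm_otens C"
abbreviation un where "un \<equiv> sm_unit C"
abbreviation sy where "sy \<equiv> sm_sym C"

lemmas AX = smc[unfolded strict_symmetric_monoidal_category_def]

lemma dcomp[simp]: "cd f = dm g \<Longrightarrow> dm (cp g f) = dm f"
  using AX by auto
lemma ccomp[simp]: "cd f = dm g \<Longrightarrow> cd (cp g f) = cd g"
  using AX by auto
lemma assoc: "cd f = dm g \<Longrightarrow> cd g = dm h \<Longrightarrow> cp h (cp g f) = cp (cp h g) f"
  using AX by auto
lemma did[simp]: "dm (idm a) = a" "cd (idm a) = a"
  using AX by auto
lemma idr0: "cp f (idm (dm f)) = f" and idl0: "cp (idm (cd f)) f = f"
  using AX by auto
lemma idr: "dm f = a \<Longrightarrow> cp f (idm a) = f" using idr0 by blast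
lemma idl: "cd f = a \<Longrightarrow> cp (idm a) f = f" using idl0 by blast
lemma dtn[simp]: "dm (tn f g) = ot (dm f) (dm g)" and ctn[simp]: "cd (tn f g) = ot (cd f) (cd g)"
  using AX by auto
lemma tid: "tn (idm a) (idm b) = idm (ot a b)"
  using AX by auto
lemma inter: "cd f = dm g \<Longrightarrow> cd f' = dm g' \<Longrightarrow> tn (cp g f) (cp g' f') = cp (tn g g') (tn f f')"
  using AX by auto
lemma oassoc[simp]: "ot (ot a b) c = ot a (ot b c)"
  using AX by auto
lemma ounit[simp]: "ot un a = a" "ot a un = a"
  using AX by auto
lemma tassoc[simp]: "tn (tn f g) h = tn f (tn g h)"
  using AX by auto
lemma tunit[simp]: "tn (idm un) f = f" "tn f (idm un) = f"
  using AX by auto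
lemma symdc: "dm (sy a b) = ot a b" "cd (sy a b) = ot b a"
  using AX by auto
lemma natur: "cp (sy (cd f) (cd g)) (tn f g) = cp (tn g f) (sy (dm f) (dm g))"
  using AX by auto
lemma syminv: "cp (sy b a) (sy a b) = idm (ot a b)"
  using AX by auto
lemma hex: "sy a (ot b c) = cp (tn (idm b) (sy a c)) (tn (sy a b) (idm c))"
  using AX by auto

lemma idid: "cp (idm a) (idm a) = idm a" using idl[of "idm a" a] by simp

lemma sym_unit: "sy a un = idm a" "sy un a = idm a"
proof -
  have h: "sy a un = cp (sy a un) (sy a un)"
    using hex[of a un un] by simp
  have i: "cp (sy un a) (sy a un) = idm a" using syminv[of un a] by simp
  have "sy a un = cp (cp (sy un a) (sy a un)) (sy a un)"
    using i idl[of "sy a un" a] by (simp add: symdc)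
  also have "\<dots> = cp (sy un a) (cp (sy a un) (sy a un))"
    by (rule assoc[symmetric]) (simp_all add: symdc)
  also have "\<dots> = idm a" using h i by simp
  finally show 1: "sy a un = idm a" .
  have "cp (sy a un) (sy un a) = idm a" using syminv[of a un] by simp
  then show "sy un a = idm a" using 1 idl[of "sy un a" a] by (simp add: symdc)
qed

lemma hex2: "sy (ot b c) a = cp (tn (sy b a) (idm c)) (tn (idm b) (sy c a))"
proof -
  define Y where "Y = cp (tn (sy b a) (idm c)) (tn (idm b) (sy c a))"
  define V where "V = sy a (ot b c)"
  define Z where "Z = sy (ot b c) a"
  have V: "V = cp (tn (idm b) (sy a c)) (tn (sy a b) (idm c))" unfolding V_def by (rule hex)
  have dY: "dm Y = ot b (ot c a)" "cd Y = ot a (ot b c)" unfolding Y_def by (simp_all add: symdc)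
  have dV: "dm V = ot a (ot b c)" "cd V = ot b (ot c a)" unfolding V_def by (simp_all add: symdc)
  have dZ: "dm Z = ot b (ot c a)" "cd Z = ot a (ot b c)" unfolding Z_def by (simp_all add: symdc)
  have VZ: "cp V Z = idm (ot b (ot c a))" unfolding V_def Z_def using syminv[of a "ot b c"] by simp
  have "cp Y V = cp (tn (sy b a) (idm c)) (cp (tn (idm b) (sy c a)) (cp (tn (idm b) (sy a c)) (tn (sy a b) (idm c))))"
    unfolding Y_def V by (rule assoc[symmetric]) (simp_all add: symdc)
  also have "cp (tn (idm b) (sy c a)) (cp (tn (idm b) (sy a c)) (tn (sy a b) (idm c)))
     = cp (cp (tn (idm b) (sy c a)) (tn (idm b) (sy a c))) (tn (sy a b) (idm c))"
    by (rule assoc) (simp_all add: symdc)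
  also have "cp (tn (idm b) (sy c a)) (tn (idm b) (sy a c)) = tn (cp (idm b) (idm b)) (cp (sy c a) (sy a c))"
    by (rule inter[symmetric]) (simp_all add: symdc)
  also have "\<dots> = idm (ot b (ot a c))" by (simp add: idid syminv tid)
  also have "cp (idm (ot b (ot a c))) (tn (sy a b) (idm c)) = tn (sy a b) (idm c)"
    by (rule idl) (simp add: symdc)
  also have "cp (tn (sy b a) (idm c)) (tn (sy a b) (idm c)) = tn (cp (sy b a) (sy a b)) (cp (idm c) (idm c))"
    by (rule inter[symmetric]) (simp_all add: symdc)
  also have "\<dots> = idm (ot a (ot b c))" by (simp add: idid syminv tid)
  finally have YV: "cp Y V = idm (ot a (ot b c))" .
  have "Z = cp (idm (ot a (ot b c))) Z" using idl[of Z] dZ by simp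
  also have "\<dots> = cp (cp Y V) Z" using YV by simp
  also have "\<dots> = cp Y (cp V Z)" by (rule assoc[symmetric]) (simp_all add: dY dV dZ)
  also have "\<dots> = Y" using VZ idr[of Y] dY by simp
  finally show ?thesis unfolding Z_def Y_def .
qed


lemma wc_dc: "wc C (f # r) \<Longrightarrow> dm (cmp C (f # r)) = dm (last (f # r)) \<and> cd (cmp C (f # r)) = cd f"
proof (induction r arbitrary: f)
  case Nil then show ?case by simp
next
  case (Cons g r)
  then have "wc C (g # r)" "cd g = dm f" by simp_all
  with Cons.IH[of g] show ?case by (simp add: cmp.simps(3))
qed

lemma wc_dc2: "wc C xs \<Longrightarrow> xs \<noteq> [] \<Longrightarrow> dm (cmp C xs) = dm (last xs) \<and> cd (cmp C xs) = cd (hd xs)"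
  using wc_dc by (cases xs) auto

lemma wc_app: "wc C (xs @ ys) = (wc C xs \<and> wc C ys \<and> (xs \<noteq> [] \<longrightarrow> ys \<noteq> [] \<longrightarrow> cd (hd ys) = dm (last xs)))"
proof (induction xs)
  case Nil then show ?case by simp
next
  case (Cons x xs)
  then show ?case by (cases xs; cases ys; auto)
qed

lemma cmp_app: "xs \<noteq> [] \<Longrightarrow> ys \<noteq> [] \<Longrightarrow> wc C (xs @ ys) \<Longrightarrow> cmp C (xs @ ys) = cp (cmp C xs) (cmp C ys)"
proof (induction xs)
  case Nil then show ?case by simp
next
  case (Cons x xs)
  show ?case
  proof (cases xs)
    case Nil
    with Cons.prems show ?thesis by (cases ys) (auto simp: cmp.simps(3))
  next
    case (Cons x' r)
    have w: "wc C (x # xs @ ys)" using Cons.prems by simp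
    then have w2: "wc C (xs @ ys)" and l1: "cd x' = dm x" using Cons by auto
    have wx: "wc C xs" "wc C ys" "cd (hd ys) = dm (last xs)" using w2 wc_app[of xs ys] Cons.prems Cons by auto
    have "cmp C (x # xs @ ys) = cp x (cmp C (xs @ ys))" using Cons by (simp add: cmp.simps(3))
    also have "\<dots> = cp x (cp (cmp C xs) (cmp C ys))" using Cons.IH Cons.prems w2 Cons by simp
    also have "\<dots> = cp (cp x (cmp C xs)) (cmp C ys)"
      apply (rule assoc)
      using wc_dc2[of xs] wc_dc2[of ys] wx Cons.prems l1 Cons by auto
    also have "cp x (cmp C xs) = cmp C (x # xs)" using Cons by (simp add: cmp.simps(3))
    finally show ?thesis by simp
  qed
qed

lemma cmp_sub:
  assumes E: "cmp C xs = cmp C ys" and ne: "xs \<noteq> []" "ys \<noteq> []" and wy: "wc C ys"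
    and w: "wc C (p @ xs @ q)"
  shows "cmp C (p @ xs @ q) = cmp C (p @ ys @ q) \<and> wc C (p @ ys @ q)"
proof -
  have wp: "wc C p" and wxq: "wc C (xs @ q)" and lp: "p \<noteq> [] \<longrightarrow> cd (hd xs) = dm (last p)"
    using w ne wc_app[of p "xs @ q"] by auto
  have wx: "wc C xs" and wq: "wc C q" and lq: "q \<noteq> [] \<longrightarrow> cd (hd q) = dm (last xs)"
    using wxq ne wc_app[of xs q] by auto
  have dx: "dm (cmp C xs) = dm (last xs)" "cd (cmp C xs) = cd (hd xs)" using wc_dc2 wx ne by auto
  have dy: "dm (cmp C ys) = dm (last ys)" "cd (cmp C ys) = cd (hd ys)" using wc_dc2 wy ne by auto
  have wyq: "wc C (ys @ q)" using wy wq lq dx dy E ne wc_app[of ys q] by auto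
  have wpyq: "wc C (p @ ys @ q)" using wp wyq lp dx dy E ne wc_app[of p "ys @ q"] by auto
  have eq1: "cmp C (xs @ q) = cmp C (ys @ q)"
  proof (cases "q = []")
    case True then show ?thesis using E by simp
  next
    case False
    then show ?thesis using cmp_app[of xs q] cmp_app[of ys q] wxq wyq ne E by simp
  qed
  have "cmp C (p @ xs @ q) = cmp C (p @ ys @ q)"
  proof (cases "p = []")
    case True then show ?thesis using eq1 by simp
  next
    case False
    then show ?thesis using cmp_app[of p "xs @ q"] cmp_app[of p "ys @ q"] w wpyq ne eq1 by simp
  qed
  with wpyq show ?thesis by simp
qed

lemma cmp_rw:
  assumes "cmp C xs = cmp C ys" "xs \<noteq> []" "ys \<noteq> []" "wc C ys" "wc C A"
    "take (length xs) (drop n A) = xs" "n + length xs \<le> length A"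
    "cmp C (take n A @ ys @ drop (n + length xs) A) = R"
  shows "cmp C A = R"
proof -
  have A: "A = take n A @ xs @ drop (n + length xs) A"
  proof -
    have "drop n A = xs @ drop (n + length xs) A"
      using append_take_drop_id[of "length xs" "drop n A"] assms(6) drop_drop[of "length xs" n A]
      by (simp add: add.commute)
    then show ?thesis by (metis append_take_drop_id)
  qed
  show ?thesis using cmp_sub[OF assms(1-4), of "take n A" "drop (n + length xs) A"] assms(5,8) A by simp
qed

lemma cmp_idrem:
  assumes E: "cmp C xs = idm a" and ne: "xs \<noteq> []" and w: "wc C (p @ xs @ q)" and pq: "p @ q \<noteq> []"
  shows "cmp C (p @ xs @ q) = cmp C (p @ q) \<and> wc C (p @ q)"
proof -
  have wp: "wc C p" and wxq: "wc C (xs @ q)" and lp: "p \<noteq> [] \<longrightarrow> cd (hd xs) = dm (last p)"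
    using w ne wc_app[of p "xs @ q"] by auto
  have wx: "wc C xs" and wq: "wc C q" and lq: "q \<noteq> [] \<longrightarrow> cd (hd q) = dm (last xs)"
    using wxq ne wc_app[of xs q] by auto
  have dx: "dm (last xs) = a" "cd (hd xs) = a" using wc_dc2[OF wx ne] E by auto
  show ?thesis
  proof (cases "p = []")
    case True
    then have qn: "q \<noteq> []" using pq by simp
    have "cmp C (xs @ q) = cp (idm a) (cmp C q)" using cmp_app[OF ne qn wxq] E by simp
    also have "\<dots> = cmp C q" using idl[of "cmp C q" a] wc_dc2[OF wq qn] lq qn dx by simp
    finally show ?thesis using True wq by simp
  next
    case False
    note pn = False
    show ?thesis
    proof (cases "q = []")
      case True
      have "cmp C (p @ xs) = cp (cmp C p) (idm a)" using cmp_app[OF pn ne] w True E by simp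
      also have "\<dots> = cmp C p" using idr[of "cmp C p" a] wc_dc2[OF wp pn] lp pn dx by simp
      finally show ?thesis using True wp by simp
    next
      case False
      have wpq: "wc C (p @ q)" using wp wq lp lq dx pn False wc_app[of p q] by auto
      have "cmp C (p @ xs @ q) = cp (cmp C p) (cmp C (xs @ q))" using cmp_app[OF pn] w ne by simp
      also have "cmp C (xs @ q) = cp (idm a) (cmp C q)" using cmp_app[OF ne False wxq] E by simp
      also have "\<dots> = cmp C q" using idl[of "cmp C q" a] wc_dc2[OF wq False] lq False dx by simp
      also have "cp (cmp C p) (cmp C q) = cmp C (p @ q)" using cmp_app[OF pn False wpq] by simp
      finally show ?thesis using wpq by simp
    qed
  qed
qed

lemma cmp_del:
  assumes "cmp C xs = idm a" "xs \<noteq> []" "wc C A"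
    "take (length xs) (drop n A) = xs" "n + length xs \<le> length A"
    "take n A @ drop (n + length xs) A \<noteq> []"
    "cmp C (take n A @ drop (n + length xs) A) = R"
  shows "cmp C A = R"
proof -
  have A: "A = take n A @ xs @ drop (n + length xs) A"
  proof -
    have "drop n A = xs @ drop (n + length xs) A"
      using append_take_drop_id[of "length xs" "drop n A"] assms(4) drop_drop[of "length xs" n A]
      by (simp add: add.commute)
    then show ?thesis by (metis append_take_drop_id)
  qed
  show ?thesis using cmp_idrem[OF assms(1,2), of "take n A" "drop (n + length xs) A"] assms(3,6,7) A by simp
qed

lemma cmp_ins:
  assumes "cmp C ys = idm a" "ys \<noteq> []" "wc C (take n A @ ys @ drop n A)" "A \<noteq> []"
    "cmp C (take n A @ ys @ drop n A) = R"
  shows "cmp C A = R"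
  using cmp_idrem[OF assms(1,2,3)] assms(4,5) by simp

lemma opc_smc: "strict_symmetric_monoidal_category (opc C)"
  unfolding strict_symmetric_monoidal_category_def
  apply (simp add: opc_def)
  apply (intro conjI allI impI)
  apply (simp_all add: assoc idr0 idl0 tid hex2 symdc syminv)
   apply (simp add: inter)
  apply (simp add: natur)
  done

end

locale SMCH = SMC C for C :: "('o,'m) smc" +
  fixes H :: 'o
begin

abbreviation P where "P \<equiv> pw C H"
abbreviation L where "L \<equiv> lay C H"

lemma P0[simp]: "P 0 = un" by simp
lemma P1: "P 1 = H" by (simp add: pw.simps(2) One_nat_def)
lemma P2: "P 2 = ot H H" by (simp add: pw.simps(2) numeral_2_eq_2)

declare Suc0_1[simp] Suc1_2[simp]

lemma P_add[simp]: "ot (P a) (P b) = P (a + b)"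
  by (induction a) (simp_all add: pw.simps(2))

lemma idP_add: "idm (P (a + b)) = tn (idm (P a)) (idm (P b))"
  by (simp add: tid)

lemma dL[simp]: "dm (L i f j) = ot (P i) (ot (dm f) (P j))"
  and cL[simp]: "cd (L i f j) = ot (P i) (ot (cd f) (P j))"
  by (simp_all add: lay_def)

lemma L00[simp]: "L 0 f 0 = f" by (simp add: lay_def)

lemma Lnest[simp]: "L i (L i' f j') j = L (i + i') f (j' + j)"
  unfolding lay_def idP_add[of i i'] idP_add[of j' j] by simp

lemma Lid[simp]: "L i (idm (P n)) j = idm (P (i + (n + j)))"
  by (simp add: lay_def tid)

lemma Lcomp: "cd f = dm g \<Longrightarrow> L i (cp g f) j = cp (L i g j) (L i f j)"
  unfolding lay_def
  by (subst inter[symmetric], simp_all, subst inter[symmetric], simp_all add: idid)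

lemma swap_core:
  assumes "dm f = P a" "cd f = P b" "dm g = P a'" "cd g = P b'"
  shows "cp (L (b + k) g 0) (L 0 f (k + a')) = cp (L 0 f (k + b')) (L (a + k) g 0)"
proof -
  have 1: "L (b + k) g 0 = tn (idm (P b)) (tn (idm (P k)) g)"
    unfolding lay_def idP_add[of b k] by simp
  have 2: "L 0 f (k + a') = tn f (tn (idm (P k)) (idm (P a')))"
    unfolding lay_def idP_add[of k a'] by simp
  have 3: "L 0 f (k + b') = tn f (tn (idm (P k)) (idm (P b')))"
    unfolding lay_def idP_add[of k b'] by simp
  have 4: "L (a + k) g 0 = tn (idm (P a)) (tn (idm (P k)) g)"
    unfolding lay_def idP_add[of a k] by simp
  have "cp (tn (idm (P b)) (tn (idm (P k)) g)) (tn f (tn (idm (P k)) (idm (P a'))))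
      = tn (cp (idm (P b)) f) (cp (tn (idm (P k)) g) (tn (idm (P k)) (idm (P a'))))"
    by (rule inter[symmetric]) (simp_all add: assms add.assoc)
  also have "\<dots> = tn f (tn (idm (P k)) g)"
    by (subst inter[symmetric]) (simp_all add: assms idid idl idr add.assoc)
  finally have L: "cp (L (b + k) g 0) (L 0 f (k + a')) = tn f (tn (idm (P k)) g)" using 1 2 by simp
  have "cp (tn f (tn (idm (P k)) (idm (P b')))) (tn (idm (P a)) (tn (idm (P k)) g))
      = tn (cp f (idm (P a))) (cp (tn (idm (P k)) (idm (P b'))) (tn (idm (P k)) g))"
    by (rule inter[symmetric]) (simp_all add: assms add.assoc)
  also have "\<dots> = tn f (tn (idm (P k)) g)"
    by (subst inter[symmetric]) (simp_all add: assms idid idl idr add.assoc)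
  finally have R: "cp (L 0 f (k + b')) (L (a + k) g 0) = tn f (tn (idm (P k)) g)" using 3 4 by simp
  show ?thesis using L R by simp
qed

lemma swapA:
  assumes "dm f = P a" "cd f = P b" "dm g = P a'" "cd g = P b'"
  shows "cmp C [L (i + b + k) g j, L i f (k + a' + j)] = cmp C [L i f (k + b' + j), L (i + a + k) g j]"
proof -
  have "cp (L i (L (b + k) g 0) j) (L i (L 0 f (k + a')) j) = L i (cp (L (b + k) g 0) (L 0 f (k + a'))) j"
    by (rule Lcomp[symmetric]) (simp add: assms add.assoc)
  also have "\<dots> = L i (cp (L 0 f (k + b')) (L (a + k) g 0)) j" using swap_core[OF assms] by simp
  also have "\<dots> = cp (L i (L 0 f (k + b')) j) (L i (L (a + k) g 0) j)"
    by (rule Lcomp) (simp add: assms add.assoc)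
  finally show ?thesis by (simp add: cmp.simps(3) add.assoc)
qed

lemma swapB:
  assumes "dm f = P a" "cd f = P b" "dm g = P a'" "cd g = P b'"
  shows "cmp C [L i f (k + b' + j), L (i + a + k) g j] = cmp C [L (i + b + k) g j, L i f (k + a' + j)]"
  using swapA[OF assms] by simp

lemma cmp_L: "wc C xs \<Longrightarrow> xs \<noteq> [] \<Longrightarrow> cmp C (map (\<lambda>f. L i f j) xs) = L i (cmp C xs) j \<and> wc C (map (\<lambda>f. L i f j) xs)"
proof (induction xs)
  case Nil then show ?case by simp
next
  case (Cons x xs)
  show ?case
  proof (cases xs)
    case Nil then show ?thesis by simp
  next
    case (Cons y r)
    have w: "wc C xs" "cd y = dm x" using Cons.prems Cons by auto
    have ih: "cmp C (map (\<lambda>f. L i f j) xs) = L i (cmp C xs) j" "wc C (map (\<lambda>f. L i f j) xs)"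
      using Cons.IH w Cons by auto
    have cx: "cd (cmp C xs) = cd y" using wc_dc2[OF w(1)] Cons by simp
    have "cmp C (map (\<lambda>f. L i f j) (x # xs)) = cp (L i x j) (cmp C (map (\<lambda>f. L i f j) xs))"
      using Cons by (simp add: cmp.simps(3))
    also have "\<dots> = L i (cp x (cmp C xs)) j" using ih Lcomp[of "cmp C xs" x i j] cx w by simp
    also have "cp x (cmp C xs) = cmp C (x # xs)" using Cons by (simp add: cmp.simps(3))
    finally show ?thesis using ih Cons w by simp
  qed
qed

lemma lift:
  assumes "cmp C xs = cmp C ys" "wc C xs" "wc C ys" "xs \<noteq> []" "ys \<noteq> []"
  shows "cmp C (map (\<lambda>f. L i f j) xs) = cmp C (map (\<lambda>f. L i f j) ys)"
  using cmp_L[of xs i j] cmp_L[of ys i j] assms by simp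

lemma lift0:
  assumes "cmp C xs = idm (P n)" "wc C xs" "xs \<noteq> []"
  shows "cmp C (map (\<lambda>f. L i f j) xs) = idm (P (i + (n + j)))"
  using cmp_L[of xs i j] assms by simp

end

locale HA = SMCH C H for C :: "('o,'m) smc" and H :: 'o +
  fixes m u D e S :: 'm
  assumes hopf: "hopf_algebra C H m u D e S"
begin

abbreviation X where "X \<equiv> sy H H"
lemmas HX = hopf[unfolded hopf_algebra_def Let_def]

lemma ty[simp]: "dm m = P 2" "cd m = P 1" "dm u = P 0" "cd u = P 1" "dm D = P 1" "cd D = P 2"
  "dm e = P 1" "cd e = P 0" "dm S = P 1" "cd S = P 1" "dm X = P 2" "cd X = P 2"
  using HX by (simp_all add: P1 P2 symdc)

lemma L01: "L 0 f 1 = tn f (idm H)" by (simp add: lay_def P1)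
lemma L10: "L 1 f 0 = tn (idm H) f" by (simp add: lay_def P1)
lemma L02: "L 0 f 2 = tn f (idm (ot H H))" by (simp add: lay_def P2)
lemma L20: "L 2 f 0 = tn (idm (ot H H)) f" by (simp add: lay_def P2)
lemma L11: "L 1 f 1 = tn (idm H) (tn f (idm H))" by (simp add: lay_def P1)

lemmas HS = L01 L10 L02 L20 L11 P1 P2 cmp.simps(3) symdc

lemma m_assoc: "cmp C [m, L 0 m 1] = cmp C [m, L 1 m 0]" using HX by (simp add: HS)
lemma m_unitl: "cmp C [m, L 0 u 1] = idm (P 1)" using HX by (simp add: HS)
lemma m_unitr: "cmp C [m, L 1 u 0] = idm (P 1)" using HX by (simp add: HS)
lemma D_coassoc: "cmp C [L 0 D 1, D] = cmp C [L 1 D 0, D]" using HX by (simp add: HS)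
lemma counitl: "cmp C [L 0 e 1, D] = idm (P 1)" using HX by (simp add: HS)
lemma counitr: "cmp C [L 1 e 0, D] = idm (P 1)" using HX by (simp add: HS)
lemma e_u: "cmp C [e, u] = idm (P 0)" using HX by (simp add: HS)
lemma antl: "cmp C [m, L 0 S 1, D] = cmp C [u, e]" using HX by (simp add: HS)
lemma antr: "cmp C [m, L 1 S 0, D] = cmp C [u, e]" using HX by (simp add: HS)

lemma D_u: "cmp C [D, u] = cmp C [L 0 u 1, u]"
proof -
  have "tn u u = tn (cp u (idm un)) (cp (idm H) u)" using HX by (simp add: idr idl P1)
  also have "\<dots> = cp (tn u (idm H)) (tn (idm un) u)" by (rule inter) (simp_all add: P1)
  finally show ?thesis using HX by (simp add: HS)
qed

lemma e_m: "cmp C [e, m] = cmp C [e, L 0 e 1]"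
proof -
  have "tn e e = tn (cp (idm un) e) (cp e (idm H))" using HX by (simp add: idr idl P1)
  also have "\<dots> = cp (tn (idm un) e) (tn e (idm H))" by (rule inter) (simp_all add: P1)
  finally show ?thesis using HX by (simp add: HS)
qed

lemma bialg: "cmp C [D, m] = cmp C [L 0 m 1, L 2 m 0, L 1 X 1, L 0 D 2, L 1 D 0]"
proof -
  have mm: "tn m m = cp (L 0 m 1) (L 2 m 0)"
  proof -
    have "tn m m = tn (cp m (idm (P 2))) (cp (idm (P 1)) m)" by (simp add: idr idl)
    also have "\<dots> = cp (tn m (idm (P 1))) (tn (idm (P 2)) m)" by (rule inter) simp_all
    finally show ?thesis by (simp add: lay_def)
  qed
  have DD: "tn D D = cp (L 0 D 2) (L 1 D 0)"
  proof -
    have "tn D D = tn (cp D (idm (P 1))) (cp (idm (P 2)) D)" by (simp add: idr idl)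
    also have "\<dots> = cp (tn D (idm (P 2))) (tn (idm (P 1)) D)" by (rule inter) simp_all
    finally show ?thesis by (simp add: lay_def)
  qed
  have X1: "tn (tn (idm H) X) (idm H) = L 1 X 1" by (simp add: L11)
  have "cmp C [L 0 m 1, L 2 m 0, L 1 X 1, L 0 D 2, L 1 D 0]
      = cp (cmp C [L 0 m 1, L 2 m 0]) (cmp C ([L 1 X 1] @ [L 0 D 2, L 1 D 0]))"
    using cmp_app[of "[L 0 m 1, L 2 m 0]" "[L 1 X 1] @ [L 0 D 2, L 1 D 0]"] by simp
  also have "cmp C ([L 1 X 1] @ [L 0 D 2, L 1 D 0]) = cp (L 1 X 1) (cmp C [L 0 D 2, L 1 D 0])"
    using cmp_app[of "[L 1 X 1]" "[L 0 D 2, L 1 D 0]"] by simp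
  finally show ?thesis using HX mm DD X1 by (simp add: cmp.simps(3))
qed

lemma N_u1: "cmp C [X, L 1 u 0] = cmp C [L 0 u 1]"
  using natur[of "idm H" u] by (simp add: HS sym_unit idr)
lemma N_u2: "cmp C [X, L 0 u 1] = cmp C [L 1 u 0]"
  using natur[of u "idm H"] by (simp add: HS sym_unit idr)
lemma N_m1: "cmp C [X, L 1 m 0] = cmp C [L 0 m 1, L 1 X 0, L 0 X 1]"
  using natur[of "idm H" m] by (simp add: HS hex)
lemma N_m2: "cmp C [X, L 0 m 1] = cmp C [L 1 m 0, L 0 X 1, L 1 X 0]"
  using natur[of m "idm H"] by (simp add: HS hex2)
lemma N_D: "cmp C [L 0 X 1, L 1 X 0, L 0 D 1] = cmp C [L 1 D 0, X]"
  using natur[of D "idm H"] by (simp add: HS hex2 assoc)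

lemma MU: "cmp C [L 0 m 1, L 2 m 0, L 3 u 0, L 1 u 1] = idm (P 2)"
  apply (rule cmp_del[OF lift0[OF m_unitr, where i=2 and j=0], where n=1], simp_all)
  using lift0[OF m_unitr, where i=0 and j=1] by simp

lemma ANT2: "cmp C [L 1 m 1, L 1 S 2, L 2 D 0, L 0 D 1, D] = cmp C [L 1 u 1, D]"
  apply (rule cmp_rw[OF lift[OF D_coassoc, where i=0 and j=0], where n=3], simp_all)
  apply (rule cmp_rw[OF lift[OF D_coassoc[symmetric], where i=1 and j=0], where n=2], simp_all)
  apply (rule cmp_rw[OF lift[OF antl, where i=1 and j=1], where n=0], simp_all)
  apply (rule cmp_del[OF lift0[OF counitl, where i=1 and j=0], where n=1], simp_all)
  done

lemma AC: "cmp C [D, S] = cmp C [X, L 0 S 1, L 1 S 0, D]"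
  apply (rule sym)
  apply (rule cmp_ins[OF MU, where n=0], simp_all)
  apply (rule cmp_rw[OF swapA[of u 0 1 u 0 1 1 1 0], where n=2], simp_all)
  apply (rule cmp_rw[OF lift[OF N_u1[symmetric], where i=1 and j=1], where n=2], simp_all)
  apply (rule cmp_rw[OF lift[OF D_u[symmetric], where i=2 and j=0], where n=3], simp_all)
  apply (rule cmp_rw[OF swapA[of X 2 2 u 0 1 0 0 0], where n=4], simp_all)
  apply (rule cmp_rw[OF swapA[of S 1 1 u 0 1 0 1 0], where n=5], simp_all)
  apply (rule cmp_rw[OF swapA[of S 1 1 u 0 1 1 0 0], where n=6], simp_all)
  apply (rule cmp_rw[OF swapA[of D 1 2 u 0 1 0 0 0], where n=7], simp_all)
  apply (rule cmp_ins[OF lift0[OF counitr, where i=0 and j=0], where n=9], simp_all)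
  apply (rule cmp_rw[OF lift[OF antr[symmetric], where i=1 and j=0], where n=8], simp_all)
  apply (rule cmp_rw[OF swapA[of X 2 2 D 1 2 0 0 0], where n=3], simp_all)
  apply (rule cmp_rw[OF swapA[of S 1 1 D 1 2 0 1 0], where n=4], simp_all)
  apply (rule cmp_rw[OF swapA[of S 1 1 D 1 2 1 0 0], where n=5], simp_all)
  apply (rule cmp_rw[OF swapA[of D 1 2 D 1 2 0 0 0], where n=6], simp_all)
  apply (rule cmp_rw[OF lift[OF bialg, where i=1 and j=0], where n=7], simp_all)
  apply (rule cmp_rw[OF swapB[of D 1 2 m 2 1 0 0 1], where n=6], simp_all)
  apply (rule cmp_rw[OF swapB[of S 1 1 m 2 1 1 0 1], where n=5], simp_all)
  apply (rule cmp_rw[OF swapB[of S 1 1 m 2 1 0 1 1], where n=4], simp_all)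
  apply (rule cmp_rw[OF swapB[of X 2 2 m 2 1 0 0 1], where n=3], simp_all)
  apply (rule cmp_rw[OF lift[OF N_m1, where i=1 and j=1], where n=2], simp_all)
  apply (rule cmp_rw[OF swapA[of m 2 1 m 2 1 1 0 0], where n=1], simp_all)
  apply (rule cmp_rw[OF lift[OF m_assoc[symmetric], where i=0 and j=1], where n=0], simp_all)
  apply (rule cmp_rw[OF swapB[of m 2 1 m 2 1 0 1 0], where n=1], simp_all)
  apply (rule cmp_rw[OF swapB[of m 2 1 X 2 2 0 0 1], where n=2], simp_all)
  apply (rule cmp_rw[OF lift[OF N_m1[symmetric], where i=0 and j=2], where n=3], simp_all)
  apply (rule cmp_rw[OF swapA[of S 1 1 m 2 1 0 0 2], where n=4], simp_all)
  apply (rule cmp_rw[OF swapB[of D 1 2 m 2 1 0 2 0], where n=7], simp_all)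
  apply (rule cmp_rw[OF swapB[of D 1 2 X 2 2 0 1 1], where n=8], simp_all)
  apply (rule cmp_rw[OF swapB[of D 1 2 D 1 2 0 0 2], where n=9], simp_all)
  apply (rule cmp_rw[OF swapB[of D 1 2 D 1 2 0 1 0], where n=10], simp_all)
  apply (rule cmp_rw[OF swapB[of D 1 2 S 1 1 0 1 0], where n=11], simp_all)
  apply (rule cmp_rw[OF swapB[of D 1 2 D 1 2 0 0 0], where n=12], simp_all)
  apply (rule cmp_rw[OF swapB[of S 1 1 m 2 1 1 2 0], where n=6], simp_all)
  apply (rule cmp_rw[OF swapB[of m 2 1 m 2 1 1 1 0], where n=5], simp_all)
  apply (rule cmp_rw[OF swapB[of S 1 1 X 2 2 1 1 1], where n=7], simp_all)
  apply (rule cmp_rw[OF swapB[of m 2 1 X 2 2 1 0 1], where n=6], simp_all)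
  apply (rule cmp_rw[OF swapB[of D 1 2 D 1 2 2 0 0], where n=9], simp_all)
  apply (rule cmp_rw[OF swapB[of D 1 2 S 1 1 2 0 0], where n=10], simp_all)
  apply (rule cmp_rw[OF lift[OF D_coassoc, where i=2 and j=0], where n=11], simp_all)
  apply (rule cmp_rw[OF swapB[of S 1 1 D 1 2 1 2 0], where n=8], simp_all)
  apply (rule cmp_rw[OF swapB[of m 2 1 D 1 2 1 1 0], where n=7], simp_all)
  apply (rule cmp_rw[OF swapB[of S 1 1 S 1 1 1 2 0], where n=9], simp_all)
  apply (rule cmp_rw[OF swapB[of m 2 1 S 1 1 1 1 0], where n=8], simp_all)
  apply (rule cmp_rw[OF swapB[of S 1 1 D 1 2 1 1 0], where n=10], simp_all)
  apply (rule cmp_rw[OF swapB[of m 2 1 D 1 2 1 0 0], where n=9], simp_all)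
  apply (rule cmp_rw[OF ANT2, where n=10], simp_all)
  apply (rule cmp_rw[OF swapA[of u 0 1 D 1 2 1 0 0], where n=9], simp_all)
  apply (rule cmp_rw[OF swapA[of u 0 1 S 1 1 1 1 0], where n=8], simp_all)
  apply (rule cmp_rw[OF swapA[of u 0 1 D 1 2 1 1 0], where n=7], simp_all)
  apply (rule cmp_rw[OF swapA[of u 0 1 X 2 2 1 0 1], where n=6], simp_all)
  apply (rule cmp_rw[OF swapA[of u 0 1 m 2 1 1 1 0], where n=5], simp_all)
  apply (rule cmp_rw[OF swapB[of S 1 1 u 0 1 0 0 2], where n=4], simp_all)
  apply (rule cmp_rw[OF lift[OF N_u1, where i=0 and j=2], where n=3], simp_all)
  apply (rule cmp_rw[OF swapA[of u 0 1 X 2 2 0 0 1], where n=2], simp_all)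
  apply (rule cmp_rw[OF swapA[of u 0 1 m 2 1 0 1 0], where n=1], simp_all)
  apply (rule cmp_del[OF lift0[OF m_unitl, where i=0 and j=1], where n=0], simp_all)
  apply (rule cmp_rw[OF swapB[of S 1 1 m 2 1 0 1 0], where n=2], simp_all)
  apply (rule cmp_rw[OF swapB[of X 2 2 m 2 1 0 0 0], where n=1], simp_all)
  apply (rule cmp_rw[OF lift[OF m_assoc[symmetric], where i=1 and j=0], where n=0], simp_all)
  apply (rule cmp_rw[OF swapB[of S 1 1 X 2 2 0 0 1], where n=3], simp_all)
  apply (rule cmp_rw[OF lift[OF N_m2[symmetric], where i=0 and j=1], where n=1], simp_all)
  apply (rule cmp_rw[OF swapB[of S 1 1 D 1 2 0 1 0], where n=3], simp_all)
  apply (rule cmp_rw[OF swapB[of m 2 1 D 1 2 0 0 0], where n=2], simp_all)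
  apply (rule cmp_rw[OF swapB[of S 1 1 S 1 1 0 1 0], where n=4], simp_all)
  apply (rule cmp_rw[OF swapB[of m 2 1 S 1 1 0 0 0], where n=3], simp_all)
  apply (rule cmp_rw[OF lift[OF D_coassoc[symmetric], where i=0 and j=0], where n=6], simp_all)
  apply (rule cmp_rw[OF lift[OF antl, where i=0 and j=1], where n=4], simp_all)
  apply (rule cmp_del[OF lift0[OF counitl, where i=0 and j=0], where n=5], simp_all)
  apply (rule cmp_rw[OF swapA[of u 0 1 S 1 1 0 0 0], where n=3], simp_all)
  apply (rule cmp_rw[OF swapA[of u 0 1 D 1 2 0 0 0], where n=2], simp_all)
  apply (rule cmp_rw[OF lift[OF N_u2, where i=0 and j=1], where n=1], simp_all)
  apply (rule cmp_del[OF lift0[OF m_unitl, where i=1 and j=0], where n=0], simp_all)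
  done

lemma hopf_op: "hopf_algebra (opc C) H D e m u S"
proof -
  have a1: "cp (cp m (tn S (idm H))) D = cp u e"
    using HX assoc[of D "tn S (idm H)" m] by (simp del: ty)
  have a2: "cp (cp m (tn (idm H) S)) D = cp u e"
    using HX assoc[of D "tn (idm H) S" m] by (simp del: ty)
  show ?thesis
  using HX a1 a2 unfolding hopf_algebra_def Let_def
  by (simp add: opc_def assoc symdc del: ty)
qed

lemma AM: "cmp C [S, m] = cmp C [m, L 1 S 0, L 0 S 1, X]"
proof -
  interpret op: HA "opc C" H D e m u S
    by unfold_locales (rule opc_smc, rule hopf_op)
  have "cmp (opc C) [m, S] = cmp (opc C) [sm_sym (opc C) H H, lay (opc C) H 0 S 1, lay (opc C) H 1 S 0, m]"
    by (rule op.AC)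
  then have "cp S m = cp (cp (cp m (L 1 S 0)) (L 0 S 1)) X"
    unfolding lay_opc by (simp add: cmp.simps(3) opc_def)
  then show ?thesis by (simp add: cmp.simps(3) assoc)
qed

end


locale IHA = HA C H m u D e S for C :: "('o,'m) smc" and H :: 'o and m u D e S :: 'm +
  fixes Lm l :: 'm
  assumes ih: "integral_hopf_algebra C H m u D e S Lm l"
begin

lemmas IX = ih[unfolded integral_hopf_algebra_def left_cointegral_def right_integral_def]

lemma ty2[simp]: "dm Lm = P 0" "cd Lm = P 1" "dm l = P 1" "cd l = P 0"
  using IX by (simp_all add: P1)

lemma coint: "cmp C [m, L 0 Lm 1] = cmp C [Lm, e]" using IX by (simp add: HS)
lemma integ: "cmp C [L 1 l 0, D] = cmp C [u, l]" using IX by (simp add: HS)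
lemma norm: "cmp C [l, Lm] = idm (P 0)" using IX by (simp add: HS)
lemma N_Lm: "cmp C [X, L 0 Lm 1] = cmp C [L 1 Lm 0]"
  using natur[of Lm "idm H"] by (simp add: HS sym_unit idr)
lemma N_l: "cmp C [L 1 l 0, X] = cmp C [L 0 l 1]"
  using natur[of l "idm H"] by (simp add: HS sym_unit idl)

lemma Z1: "cmp C [L 1 l 0, L 1 m 0, L 0 S 2, L 0 D 1, L 0 Lm 1] = idm (P 1)"
  apply (rule cmp_ins[OF lift0[OF m_unitr, where i=0 and j=0], where n=0], simp_all)
  apply (rule cmp_rw[OF lift[OF integ[symmetric], where i=1 and j=0], where n=1], simp_all)
  apply (rule cmp_rw[OF lift[OF bialg, where i=1 and j=0], where n=2], simp_all)
  apply (rule cmp_rw[OF swapB[of D 1 2 D 1 2 1 0 0], where n=5], simp_all)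
  apply (rule cmp_rw[OF swapA[of S 1 1 D 1 2 0 0 1], where n=6], simp_all)
  apply (rule cmp_rw[OF lift[OF D_coassoc[symmetric], where i=0 and j=1], where n=7], simp_all)
  apply (rule cmp_rw[OF swapA[of m 2 1 l 1 0 1 0 0], where n=1], simp_all)
  apply (rule cmp_rw[OF lift[OF m_assoc[symmetric], where i=0 and j=0], where n=0], simp_all)
  apply (rule cmp_rw[OF swapB[of m 2 1 l 1 0 0 1 0], where n=1], simp_all)
  apply (rule cmp_rw[OF swapB[of m 2 1 m 2 1 0 1 0], where n=2], simp_all)
  apply (rule cmp_rw[OF swapB[of m 2 1 X 2 2 0 0 1], where n=3], simp_all)
  apply (rule cmp_rw[OF swapB[of m 2 1 D 1 2 0 1 0], where n=4], simp_all)
  apply (rule cmp_rw[OF lift[OF antl, where i=0 and j=2], where n=5], simp_all)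
  apply (rule cmp_del[OF lift0[OF counitl, where i=0 and j=1], where n=6], simp_all)
  apply (rule cmp_rw[OF swapA[of u 0 1 D 1 2 0 1 0], where n=4], simp_all)
  apply (rule cmp_rw[OF swapA[of u 0 1 X 2 2 0 0 1], where n=3], simp_all)
  apply (rule cmp_rw[OF swapA[of u 0 1 m 2 1 0 1 0], where n=2], simp_all)
  apply (rule cmp_rw[OF swapA[of u 0 1 l 1 0 0 1 0], where n=1], simp_all)
  apply (rule cmp_del[OF lift0[OF m_unitl, where i=0 and j=0], where n=0], simp_all)
  apply (rule cmp_rw[OF swapA[of Lm 0 1 D 1 2 0 0 0], where n=3], simp_all)
  apply (rule cmp_rw[OF lift[OF N_Lm, where i=0 and j=1], where n=2], simp_all)
  apply (rule cmp_rw[OF lift[OF coint, where i=1 and j=0], where n=1], simp_all)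
  apply (rule cmp_del[OF lift0[OF norm, where i=1 and j=0], where n=0], simp_all)
  using counitr by simp

lemma Bfwd: "cmp C [e, L 0 l 1, L 0 m 1, L 1 S 1, L 1 D 0, L 1 Lm 0, u] = cmp C [l, S, Lm]"
  apply (rule cmp_rw[OF swapA[of u 0 1 Lm 0 1 0 0 0], where n=5], simp_all)
  apply (rule cmp_rw[OF swapA[of u 0 1 D 1 2 0 0 0], where n=4], simp_all)
  apply (rule cmp_rw[OF swapA[of u 0 1 S 1 1 0 0 1], where n=3], simp_all)
  apply (rule cmp_del[OF lift0[OF m_unitl, where i=0 and j=1], where n=2], simp_all)
  apply (rule cmp_rw[OF swapA[of l 1 0 e 1 0 0 0 0], where n=0], simp_all)
  apply (rule cmp_rw[OF swapA[of S 1 1 e 1 0 0 0 0], where n=1], simp_all)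
  apply (rule cmp_del[OF lift0[OF counitr, where i=0 and j=0], where n=2], simp_all)
  done

lemma R1: "cmp C [L 1 l 0, X, L 0 S 1, L 1 S 0, D] = cmp C [u, l, S]"
  apply (rule cmp_rw[OF lift[OF AC[symmetric], where i=0 and j=0], where n=1], simp_all)
  apply (rule cmp_rw[OF lift[OF integ, where i=0 and j=0], where n=0], simp_all)
  done

lemma Ucl: assumes hyp: "cmp C [l, S, Lm] = idm (P 0)"
  shows "cmp C [L 0 l 1, L 0 S 1, D, Lm] = cmp C [u]"
  apply (rule cmp_ins[OF lift0[OF m_unitl, where i=0 and j=0], where n=0], simp_all)
  apply (rule cmp_rw[OF lift[OF R1[symmetric], where i=0 and j=1], where n=1], simp_all)
  apply (rule cmp_rw[OF lift[OF D_coassoc, where i=0 and j=0], where n=5], simp_all)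
  apply (rule cmp_rw[OF lift[OF N_l, where i=0 and j=1], where n=1], simp_all)
  apply (rule cmp_rw[OF swapA[of l 1 0 m 2 1 0 0 0], where n=0], simp_all)
  apply (rule cmp_rw[OF swapA[of S 1 1 m 2 1 0 0 0], where n=1], simp_all)
  apply (rule cmp_rw[OF lift[OF antl, where i=1 and j=0], where n=2], simp_all)
  apply (rule cmp_del[OF lift0[OF counitr, where i=0 and j=0], where n=3], simp_all)
  apply (rule cmp_rw[OF swapB[of S 1 1 u 0 1 0 0 0], where n=1], simp_all)
  apply (rule cmp_rw[OF swapB[of l 1 0 u 0 1 0 0 0], where n=0], simp_all)
  apply (rule cmp_del[OF hyp, where n=1], simp_all)
  done

lemma Cmain: assumes hyp: "cmp C [l, S, Lm] = idm (P 0)"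
  shows "cmp C [L 0 l 1, L 0 m 1, L 1 S 1, L 1 D 0, L 1 Lm 0] = idm (P 1)"
  apply (rule cmp_ins[OF lift0[OF counitr, where i=0 and j=0], where n=5], simp_all)
  apply (rule cmp_rw[OF lift[OF coint[symmetric], where i=1 and j=0], where n=4], simp_all)
  apply (rule cmp_rw[OF lift[OF bialg, where i=1 and j=0], where n=3], simp_all)
  apply (rule cmp_rw[OF lift[OF AM, where i=1 and j=1], where n=2], simp_all)
  apply (rule cmp_rw[OF lift[OF m_assoc[symmetric], where i=0 and j=1], where n=1], simp_all)
  apply (rule cmp_rw[OF swapA[of S 1 1 S 1 1 1 0 1], where n=3], simp_all)
  apply (rule cmp_rw[OF swapA[of Lm 0 1 D 1 2 1 0 0], where n=9], simp_all)
  apply (rule cmp_rw[OF lift[OF D_coassoc[symmetric], where i=0 and j=0], where n=10], simp_all)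
  apply (rule cmp_rw[OF swapB[of X 2 2 m 2 1 1 0 0], where n=5], simp_all)
  apply (rule cmp_rw[OF lift[OF N_D, where i=1 and j=1], where n=6], simp_all)
  apply (rule cmp_rw[OF lift[OF N_Lm, where i=1 and j=1], where n=7], simp_all)
  apply (rule cmp_rw[OF swapA[of D 1 2 Lm 0 1 0 0 1], where n=7], simp_all)
  apply (rule cmp_rw[OF swapA[of D 1 2 D 1 2 0 0 1], where n=6], simp_all)
  apply (rule cmp_rw[OF swapA[of D 1 2 m 2 1 0 1 0], where n=5], simp_all)
  apply (rule cmp_rw[OF swapA[of D 1 2 S 1 1 0 0 1], where n=4], simp_all)
  apply (rule cmp_rw[OF lift[OF antr, where i=0 and j=2], where n=2], simp_all)
  apply (rule cmp_del[OF lift0[OF m_unitl, where i=0 and j=1], where n=1], simp_all)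
  apply (rule cmp_rw[OF swapB[of e 1 0 S 1 1 0 0 1], where n=1], simp_all)
  apply (rule cmp_rw[OF swapB[of e 1 0 m 2 1 0 1 0], where n=2], simp_all)
  apply (rule cmp_rw[OF swapB[of e 1 0 D 1 2 0 0 1], where n=3], simp_all)
  apply (rule cmp_rw[OF swapB[of e 1 0 Lm 0 1 0 0 1], where n=4], simp_all)
  apply (rule cmp_del[OF lift0[OF counitl, where i=0 and j=0], where n=5], simp_all)
  apply (rule cmp_rw[OF swapB[of S 1 1 m 2 1 0 0 0], where n=1], simp_all)
  apply (rule cmp_rw[OF swapB[of l 1 0 m 2 1 0 0 0], where n=0], simp_all)
  apply (rule cmp_rw[OF lift[OF Ucl[OF hyp], where i=0 and j=1], where n=1], simp_all)
  using m_unitl by simp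


lemma main_loc:
  "(let beta = cp l m; gamma = cp (tn S (idm H)) (cp D Lm)
    in cp (tn (idm H) beta) (tn gamma (idm H)) = idm H \<and>
       cp (tn beta (idm H)) (tn (idm H) gamma) = idm H)
   \<longleftrightarrow> cp l (cp S Lm) = idm un"
proof -
  have g: "cp (tn S (idm H)) (cp D Lm) = cmp C [L 0 S 1, D, Lm]" by (simp add: cmp.simps(3) L01)
  have b: "cp l m = cmp C [l, m]" by (simp add: cmp.simps(3))
  have t1: "tn (idm H) (cmp C [l, m]) = cmp C [L 1 l 0, L 1 m 0]"
    using cmp_L[of "[l, m]" 1 0] unfolding L10[symmetric] by simp
  have t2: "tn (cmp C [L 0 S 1, D, Lm]) (idm H) = cmp C [L 0 S 2, L 0 D 1, L 0 Lm 1]"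
    using cmp_L[of "[L 0 S 1, D, Lm]" 0 1] unfolding L01[symmetric] by simp
  have t3: "tn (cmp C [l, m]) (idm H) = cmp C [L 0 l 1, L 0 m 1]"
    using cmp_L[of "[l, m]" 0 1] unfolding L01[symmetric] by simp
  have t4: "tn (idm H) (cmp C [L 0 S 1, D, Lm]) = cmp C [L 1 S 1, L 1 D 0, L 1 Lm 0]"
    using cmp_L[of "[L 0 S 1, D, Lm]" 1 0] unfolding L10[symmetric] by simp
  have e1: "cp (cmp C [L 1 l 0, L 1 m 0]) (cmp C [L 0 S 2, L 0 D 1, L 0 Lm 1])
      = cmp C [L 1 l 0, L 1 m 0, L 0 S 2, L 0 D 1, L 0 Lm 1]"
    using cmp_app[of "[L 1 l 0, L 1 m 0]" "[L 0 S 2, L 0 D 1, L 0 Lm 1]"] by simp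
  have e2: "cp (cmp C [L 0 l 1, L 0 m 1]) (cmp C [L 1 S 1, L 1 D 0, L 1 Lm 0])
      = cmp C [L 0 l 1, L 0 m 1, L 1 S 1, L 1 D 0, L 1 Lm 0]"
    using cmp_app[of "[L 0 l 1, L 0 m 1]" "[L 1 S 1, L 1 D 0, L 1 Lm 0]"] by simp
  have v: "cp l (cp S Lm) = cmp C [l, S, Lm]" by (simp add: cmp.simps(3))
  have W: "cmp C [L 0 l 1, L 0 m 1, L 1 S 1, L 1 D 0, L 1 Lm 0] = idm H
      \<longleftrightarrow> cmp C [l, S, Lm] = idm un"
  proof
    assume hW: "cmp C [L 0 l 1, L 0 m 1, L 1 S 1, L 1 D 0, L 1 Lm 0] = idm H"
    have "cmp C ([e] @ ([L 0 l 1, L 0 m 1, L 1 S 1, L 1 D 0, L 1 Lm 0] @ [u]))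
        = cp e (cmp C ([L 0 l 1, L 0 m 1, L 1 S 1, L 1 D 0, L 1 Lm 0] @ [u]))"
      using cmp_app[of "[e]" "[L 0 l 1, L 0 m 1, L 1 S 1, L 1 D 0, L 1 Lm 0] @ [u]"] by simp
    also have "cmp C ([L 0 l 1, L 0 m 1, L 1 S 1, L 1 D 0, L 1 Lm 0] @ [u])
        = cp (cmp C [L 0 l 1, L 0 m 1, L 1 S 1, L 1 D 0, L 1 Lm 0]) u"
      using cmp_app[of "[L 0 l 1, L 0 m 1, L 1 S 1, L 1 D 0, L 1 Lm 0]" "[u]"] by simp
    also have "\<dots> = u" using hW idl[of u H] by (simp add: P1)
    also have "cp e u = idm (P 0)" using e_u by (simp add: cmp.simps(3))
    finally show "cmp C [l, S, Lm] = idm un" using Bfwd by simp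
  next
    assume "cmp C [l, S, Lm] = idm un"
    then show "cmp C [L 0 l 1, L 0 m 1, L 1 S 1, L 1 D 0, L 1 Lm 0] = idm H"
      using Cmain by (simp add: P1)
  qed
  show ?thesis
    unfolding Let_def g b t1 t2 t3 t4 e1 e2 v
    using Z1 W by (simp add: P1)
qed

end

theorem mainTheorem2:
  fixes C :: "('o, 'm) smc"
  assumes "strict_symmetric_monoidal_category C"
    and "integral_hopf_algebra C H mu eta De ep s Lam lam"
  shows "(let beta = sm_comp C lam mu;
              gamma = sm_comp C (sm_tens C s (sm_id C H)) (sm_comp C De Lam)
          in sm_comp C (sm_tens C (sm_id C H) beta) (sm_tens C gamma (sm_id C H)) = sm_id C H \<and>
             sm_comp C (sm_tens C beta (sm_id C H)) (sm_tens C (sm_id C H) gamma) = sm_id C H)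
         \<longleftrightarrow> sm_comp C lam (sm_comp C s Lam) = sm_id C (sm_unit C)"
proof -
  interpret IHA C H mu eta De ep s Lam lam
    using assms by unfold_locales (auto simp: integral_hopf_algebra_def)
  show ?thesis by (rule main_loc)
qed

end
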